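(* Let $A$ be a finite-dimensional complex evolution algebra with natural basis $B=\{e_1,\dots,e_n\}$ and structure matrix $W=(\omega_{ij})$ (so $e_j^2=\sum_i\omega_{ij}e_i$). Then $A$ is m-semisimple if and only if for every $i=1,\dots,n$ there exists $a=\sum_{k=1}^n\alpha_ke_k\in\mathrm{lin}\{e_j^2:j\in D(i)\cup\{i\}\}$ such that the matrix $W\,\mathrm{diag}(\alpha_1,\dots,\alpha_n)$ has a non-zero eigenvalue.
   Context: An evolution algebra is an algebra with a basis $\{e_i\}$ (natural basis) with $e_ie_j=0$ for $i\neq j$. Descendents: $D^1(i)=\{j:\omega_{ji}\neq0\}$, $D^n(i)=\bigcup_{j\in D^{n-1}(i)}D^1(j)$, $D(i)=\bigcup_{n\ge1}D^n(i)$. For a complex algebra $A$: if $A$ has a unit $e$ put $\tilde A=A$, else $\tilde A=A\oplus\mathbb{C}\mathbf1$ (unitization, product $(a+\lambda\mathbf1)(b+\mu\mathbf1)=ab+\lambda b+\mu a+\lambda\mu\mathbf1$, $e=\mathbf1$). $x\in\tilde A$ is m-invertible if $L_x(y)=xy$ and $R_x(y)=yx$ are bijective on $\tilde A$; the m-spectrum is $\sigma^A_m(a)=\{\lambda\in\mathbb{C}:a-\lambda e\text{ not m-invertible}\}$ and $\rho_m(a)=\sup\{|\lambda|:\lambda\in\sigma^A_m(a)\}$ ($=0$ if empty). $A$ is m-semisimple if $\{0\}$ is the only ideal of $A$ contained in $\{a\in A:\rho_m(a)=0\}$. *)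

theory Defs
  imports "Jordan_Normal_Form.Char_Poly" "HOL-Library.Extended_Real"
begin

text \<open>A complex evolution algebra of dimension n with natural basis e_0,...,e_(n-1)
  is modelled on carrier_vec n (coordinates w.r.t. the natural basis).  The structure
  matrix W (n x n) satisfies e_j^2 = sum_i W(i,j) e_i, so x y = W (x o y),
  where o is the coordinatewise product.\<close>

definition evo_mult :: "complex mat \<Rightarrow> complex vec \<Rightarrow> complex vec \<Rightarrow> complex vec" where
  "evo_mult W x y = W *\<^sub>v vec (dim_col W) (\<lambda>j. x $ j * y $ j)"

text \<open>m-invertibility on a carrier: left and right multiplication are bijective.\<close>
definition m_invertible_on :: "'a set \<Rightarrow> ('a \<Rightarrow> 'a \<Rightarrow> 'a) \<Rightarrow> 'a \<Rightarrow> bool" where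
  "m_invertible_on S m x \<longleftrightarrow> bij_betw (m x) S S \<and> bij_betw (\<lambda>y. m y x) S S"

definition evo_is_unit :: "complex mat \<Rightarrow> complex vec \<Rightarrow> bool" where
  "evo_is_unit W e \<longleftrightarrow> e \<in> carrier_vec (dim_col W) \<and>
     (\<forall>x \<in> carrier_vec (dim_col W). evo_mult W e x = x \<and> evo_mult W x e = x)"

text \<open>Product on the unitization A (+) C 1:
  (a + l 1)(b + m 1) = ab + l b + m a + l m 1.\<close>
definition unitz_mult :: "complex mat \<Rightarrow> complex vec \<times> complex \<Rightarrow> complex vec \<times> complex \<Rightarrow> complex vec \<times> complex" where
  "unitz_mult W p q = (evo_mult W (fst p) (fst q) + snd p \<cdot>\<^sub>v fst q + snd q \<cdot>\<^sub>v fst p, snd p * snd q)"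

text \<open>m-spectrum of a in A: if A has a unit e, computed in A itself; otherwise in the
  unitization, where a - l 1 is the pair (a, -l).\<close>
definition m_spectrum :: "complex mat \<Rightarrow> complex vec \<Rightarrow> complex set" where
  "m_spectrum W a =
     (if \<exists>e. evo_is_unit W e
      then {l. \<not> m_invertible_on (carrier_vec (dim_col W)) (evo_mult W)
                    (a - l \<cdot>\<^sub>v (SOME e. evo_is_unit W e))}
      else {l. \<not> m_invertible_on (carrier_vec (dim_col W) \<times> UNIV) (unitz_mult W) (a, - l)})"

text \<open>m-spectral radius (extended real, to allow an unbounded spectrum; 0 if empty).\<close>
definition m_spectral_radius :: "complex mat \<Rightarrow> complex vec \<Rightarrow> ereal" where
  "m_spectral_radius W a =
     (if m_spectrum W a = {} then 0 else Sup ((\<lambda>l. ereal (cmod l)) ` m_spectrum W a))"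

text \<open>(Two-sided) ideals of the evolution algebra.\<close>
definition evo_ideal :: "complex mat \<Rightarrow> complex vec set \<Rightarrow> bool" where
  "evo_ideal W I \<longleftrightarrow> I \<subseteq> carrier_vec (dim_col W) \<and> 0\<^sub>v (dim_col W) \<in> I \<and>
     (\<forall>x\<in>I. \<forall>y\<in>I. x + y \<in> I) \<and> (\<forall>c. \<forall>x\<in>I. c \<cdot>\<^sub>v x \<in> I) \<and>
     (\<forall>a\<in>carrier_vec (dim_col W). \<forall>x\<in>I. evo_mult W a x \<in> I \<and> evo_mult W x a \<in> I)"

definition m_semisimple :: "complex mat \<Rightarrow> bool" where
  "m_semisimple W \<longleftrightarrow>
     (\<forall>I. evo_ideal W I \<and> I \<subseteq> {a \<in> carrier_vec (dim_col W). m_spectral_radius W a = 0}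
          \<longrightarrow> I = {0\<^sub>v (dim_col W)})"

text \<open>Descendents: D^1(i) = {j. W(j,i) \<noteq> 0}, D(i) = union of all D^k(i), k \<ge> 1,
  i.e. the image of i under the transitive closure of the one-step relation.\<close>
definition desc_rel :: "complex mat \<Rightarrow> (nat \<times> nat) set" where
  "desc_rel W = {(i, j). i < dim_col W \<and> j < dim_col W \<and> W $$ (j, i) \<noteq> 0}"

definition descendents :: "complex mat \<Rightarrow> nat \<Rightarrow> nat set" where
  "descendents W i = (desc_rel W)\<^sup>+ `` {i}"

text \<open>Linear span of the squares e_j^2 = col W j, j in S (finite linear combinations).\<close>
definition lin_squares :: "complex mat \<Rightarrow> nat set \<Rightarrow> complex vec set" where
  "lin_squares W S = {a. \<exists>c. a = finsum_vec TYPE(complex) (dim_row W)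
        (\<lambda>j. c j \<cdot>\<^sub>v col W j) (S \<inter> {..<dim_col W})}"

definition diag_of :: "complex vec \<Rightarrow> complex mat" where
  "diag_of a = mat (dim_vec a) (dim_vec a) (\<lambda>(i, j). if i = j then a $ i else 0)"

end

theory Submission
  imports Defs
begin


lemma diag_of_carrier: "a \<in> carrier_vec n \<Longrightarrow> diag_of a \<in> carrier_mat n n"
  by (auto simp: diag_of_def)

lemma diag_mult: assumes "a \<in> carrier_vec n" "y \<in> carrier_vec n"
  shows "diag_of a *\<^sub>v y = vec n (\<lambda>j. a $ j * y $ j)"
proof (rule eq_vecI)
  show "dim_vec (diag_of a *\<^sub>v y) = dim_vec (vec n (\<lambda>j. a $ j * y $ j))" using assms by (simp add: diag_of_def)
  fix i assume i: "i < dim_vec (vec n (\<lambda>j. a $ j * y $ j))"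
  hence "(diag_of a *\<^sub>v y) $ i = (\<Sum>k<n. (if i = k then a $ i else 0) * y $ k)"
    using assms by (simp add: diag_of_def mult_mat_vec_def scalar_prod_def row_def atLeast0LessThan)
  also have "\<dots> = a $ i * y $ i" using i by (subst sum.cong[where B="{..<n}" and h="\<lambda>k. if k = i then a$i*y$i else 0"]) auto
  finally show "(diag_of a *\<^sub>v y) $ i = vec n (\<lambda>j. a $ j * y $ j) $ i" using i by simp
qed

lemma evo_mult_eq: assumes W: "W \<in> carrier_mat n n" and "a \<in> carrier_vec n" "y \<in> carrier_vec n"
  shows "evo_mult W a y = (W * diag_of a) *\<^sub>v y"
  using assms diag_mult[OF assms(2,3)] diag_of_carrier[OF assms(2)]
  by (simp add: evo_mult_def assoc_mult_mat_vec)



lemma char_mult: "A \<in> carrier_mat n n \<Longrightarrow> (v::complex vec) \<in> carrier_vec n \<Longrightarrow> (A + (-l) \<cdot>\<^sub>m 1\<^sub>m n) *\<^sub>v v = A *\<^sub>v v - l \<cdot>\<^sub>v v"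
  by (subst add_mult_distrib_mat_vec[of _ n n]) auto

lemma evo_mult_comm: "evo_mult W x y = evo_mult W y x"
  unfolding evo_mult_def by (simp add: mult.commute)

lemma evo_mult_carrier: "W \<in> carrier_mat n n \<Longrightarrow> evo_mult W x y \<in> carrier_vec n"
  unfolding evo_mult_def by auto

lemma evo_mult_zero: assumes W: "W \<in> carrier_mat n n" shows "evo_mult W x (0\<^sub>v n) = 0\<^sub>v n"
proof -
  have "vec (dim_col W) (\<lambda>j. x $ j * 0\<^sub>v n $ j) = 0\<^sub>v n" using W by (intro eq_vecI) auto
  moreover have "W *\<^sub>v 0\<^sub>v n = 0\<^sub>v n" using W by (intro eq_vecI) (auto simp: scalar_prod_def)
  ultimately show ?thesis using W unfolding evo_mult_def by simp
qed

lemma unit_props: assumes W: "W \<in> carrier_mat n n" and "evo_is_unit W e"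
  shows "e \<in> carrier_vec n" "\<And>x. x \<in> carrier_vec n \<Longrightarrow> evo_mult W e x = x"
  using assms unfolding evo_is_unit_def by auto

lemma evo_mult_lin: assumes W: "W \<in> carrier_mat n n" and a: "a \<in> carrier_vec n" and e: "e \<in> carrier_vec n"
  and y: "y \<in> carrier_vec n"
  shows "evo_mult W (a - l \<cdot>\<^sub>v e) y = evo_mult W a y - l \<cdot>\<^sub>v evo_mult W e y"
proof -
  have "vec n (\<lambda>j. (a - l \<cdot>\<^sub>v e) $ j * y $ j) = vec n (\<lambda>j. a $ j * y $ j) - l \<cdot>\<^sub>v vec n (\<lambda>j. e $ j * y $ j)"
    using a e y by (intro eq_vecI) (auto simp: algebra_simps)
  thus ?thesis using W a e y unfolding evo_mult_def
    by (simp add: mult_minus_distrib_mat_vec[of W n n] mult_mat_vec[of W n n])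
qed

lemma invertible_char: assumes P: "P \<in> carrier_mat n n" and d: "det P \<noteq> (0::complex)"
  obtains Q where "Q \<in> carrier_mat n n" "Q * P = 1\<^sub>m n" "P * Q = 1\<^sub>m n"
  using det_non_zero_imp_unit[OF P d, of undefined] unfolding Units_def ring_mat_def by auto

lemma spec_in: assumes W: "W \<in> carrier_mat n n" and a: "a \<in> carrier_vec n"
  and ev: "eigenvalue (W * diag_of a) l"
  shows "l \<in> m_spectrum W a"
proof -
  have M: "W * diag_of a \<in> carrier_mat n n" using W diag_of_carrier[OF a] by auto
  from ev obtain v where v: "v \<in> carrier_vec n" "v \<noteq> 0\<^sub>v n" "(W * diag_of a) *\<^sub>v v = l \<cdot>\<^sub>v v"
    unfolding eigenvalue_def eigenvector_def using M by auto
  have Mv: "evo_mult W a v = l \<cdot>\<^sub>v v" using evo_mult_eq[OF W a v(1)] v(3) by simp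
  show ?thesis
  proof (cases "\<exists>e. evo_is_unit W e")
    case True
    define e where "e = (SOME e. evo_is_unit W e)"
    have eu: "evo_is_unit W e" unfolding e_def using True by (rule someI_ex)
    note ep = unit_props[OF W eu]
    have "evo_mult W (a - l \<cdot>\<^sub>v e) v = 0\<^sub>v n"
      using evo_mult_lin[OF W a ep(1) v(1)] Mv ep(2)[OF v(1)] v(1) by simp
    moreover have "evo_mult W (a - l \<cdot>\<^sub>v e) (0\<^sub>v n) = 0\<^sub>v n"
      using evo_mult_zero[OF W] .
    ultimately have "\<not> inj_on (evo_mult W (a - l \<cdot>\<^sub>v e)) (carrier_vec n)"
      using v unfolding inj_on_def by (metis zero_carrier_vec)
    thus ?thesis using True W unfolding m_spectrum_def m_invertible_on_def e_def bij_betw_def by auto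
  next
    case False
    have "unitz_mult W (a, - l) (v, 0) = (0\<^sub>v n, 0)"
      using Mv v(1) a unfolding unitz_mult_def by (auto intro!: eq_vecI)
    moreover have "unitz_mult W (a, - l) (0\<^sub>v n, 0) = (0\<^sub>v n, 0)"
      using W a evo_mult_zero[OF W] unfolding unitz_mult_def by auto
    ultimately have "\<not> inj_on (unitz_mult W (a, - l)) (carrier_vec n \<times> UNIV)"
      using v unfolding inj_on_def by (metis zero_carrier_vec SigmaI UNIV_I prod.inject)
    thus ?thesis using False W unfolding m_spectrum_def m_invertible_on_def bij_betw_def by auto
  qed
qed

lemma unitz_comm: assumes W: "W \<in> carrier_mat n n" and "fst p \<in> carrier_vec n" "fst q \<in> carrier_vec n"
  shows "unitz_mult W p q = unitz_mult W q p"
  using assms evo_mult_comm[of W "fst p" "fst q"] evo_mult_carrier[OF W]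
  unfolding unitz_mult_def by (auto intro!: eq_vecI simp: mult.commute)

lemma bijP: fixes P Q :: "complex mat" assumes P: "P \<in> carrier_mat n n" and Q: "Q \<in> carrier_mat n n" 
  and QP: "Q * P = 1\<^sub>m n" and PQ: "P * Q = 1\<^sub>m n"
  shows "bij_betw (\<lambda>y. P *\<^sub>v y) (carrier_vec n) (carrier_vec n)"
proof (rule bij_betwI[where g="\<lambda>y. Q *\<^sub>v y"])
  show "(*\<^sub>v) P \<in> carrier_vec n \<rightarrow> carrier_vec n" using P by auto
  show "(*\<^sub>v) Q \<in> carrier_vec n \<rightarrow> carrier_vec n" using Q by auto
  fix x :: "complex vec" assume x: "x \<in> carrier_vec n"
  have "Q *\<^sub>v (P *\<^sub>v x) = (Q * P) *\<^sub>v x" using P Q x by simp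
  thus "Q *\<^sub>v (P *\<^sub>v x) = x" using QP x by simp
next
  fix x :: "complex vec" assume x: "x \<in> carrier_vec n"
  have "P *\<^sub>v (Q *\<^sub>v x) = (P * Q) *\<^sub>v x" using P Q x by simp
  thus "P *\<^sub>v (Q *\<^sub>v x) = x" using PQ x by simp
qed

lemma spec_out: assumes W: "W \<in> carrier_mat n n" and a: "a \<in> carrier_vec n"
  and ev: "\<not> eigenvalue (W * diag_of a) l" and l: "l \<noteq> 0"
  shows "l \<notin> m_spectrum W a"
proof -
  define M where "M = W * diag_of a"
  have M: "M \<in> carrier_mat n n" using W diag_of_carrier[OF a] by (auto simp: M_def)
  define P where "P = M + (-l) \<cdot>\<^sub>m 1\<^sub>m n"
  have P: "P \<in> carrier_mat n n" using M by (auto simp: P_def)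
  have "det P \<noteq> 0" using ev eigenvalue_det[OF M, of l] M unfolding char_matrix_def P_def M_def by auto
  then obtain Q where Q: "Q \<in> carrier_mat n n" "Q * P = 1\<^sub>m n" "P * Q = 1\<^sub>m n"
    using invertible_char[OF P] by blast
  have Py: "P *\<^sub>v y = evo_mult W a y - l \<cdot>\<^sub>v y" if "y \<in> carrier_vec n" for y
    using char_mult[OF M that, of l] evo_mult_eq[OF W a that] unfolding P_def M_def by simp
  have bP: "bij_betw (\<lambda>y. P *\<^sub>v y) (carrier_vec n) (carrier_vec n)" using bijP[OF P Q] .
  show ?thesis
  proof (cases "\<exists>e. evo_is_unit W e")
    case True
    define e where "e = (SOME e. evo_is_unit W e)"
    have eu: "evo_is_unit W e" unfolding e_def using True by (rule someI_ex)
    note ep = unit_props[OF W eu]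
    have L: "bij_betw (evo_mult W (a - l \<cdot>\<^sub>v e)) (carrier_vec n) (carrier_vec n)"
      by (rule bij_betw_cong[THEN iffD1, OF _ bP]) (use evo_mult_lin[OF W a ep(1)] ep(2) Py in simp)
    have "(\<lambda>y. evo_mult W y (a - l \<cdot>\<^sub>v e)) = evo_mult W (a - l \<cdot>\<^sub>v e)"
      by (rule ext) (rule evo_mult_comm)
    with L have "m_invertible_on (carrier_vec n) (evo_mult W) (a - l \<cdot>\<^sub>v e)"
      unfolding m_invertible_on_def by simp
    thus ?thesis using True W unfolding m_spectrum_def e_def by auto
  next
    case False
    let ?S = "(carrier_vec n :: complex vec set) \<times> (UNIV :: complex set)"
    have f: "unitz_mult W (a, - l) p = (P *\<^sub>v fst p + snd p \<cdot>\<^sub>v a, -l * snd p)" if "p \<in> ?S" for p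
      using that Py[of "fst p"] a evo_mult_carrier[OF W] unfolding unitz_mult_def
      by (auto intro!: eq_vecI)
    have L: "bij_betw (unitz_mult W (a, - l)) ?S ?S"
    proof (rule bij_betwI[where g="\<lambda>p. (Q *\<^sub>v (fst p - (- snd p / l) \<cdot>\<^sub>v a), - snd p / l)"])
      show "unitz_mult W (a, - l) \<in> ?S \<rightarrow> ?S" using f P a by auto
      show "(\<lambda>p. (Q *\<^sub>v (fst p - (- snd p / l) \<cdot>\<^sub>v a), - snd p / l)) \<in> ?S \<rightarrow> ?S" using Q a by auto
    next
      fix p assume p: "p \<in> ?S"
      have "P *\<^sub>v fst p + snd p \<cdot>\<^sub>v a - (- (-l * snd p) / l) \<cdot>\<^sub>v a = P *\<^sub>v fst p"
        using p P a l by (auto intro!: eq_vecI)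
      moreover have "Q *\<^sub>v (P *\<^sub>v fst p) = fst p"
        using bP p Q P by (metis (no_types, lifting) SigmaE assoc_mult_mat_vec fst_conv one_mult_mat_vec Q(2))
      ultimately show "(\<lambda>p. (Q *\<^sub>v (fst p - (- snd p / l) \<cdot>\<^sub>v a), - snd p / l)) (unitz_mult W (a, - l) p) = p"
        using f[OF p] l by (cases p) auto
    next
      fix p assume p: "p \<in> ?S"
      define w where "w = fst p - (- snd p / l) \<cdot>\<^sub>v a"
      have w: "w \<in> carrier_vec n" using p a by (auto simp: w_def)
      have "P *\<^sub>v (Q *\<^sub>v w) = w" using w P Q by (metis assoc_mult_mat_vec one_mult_mat_vec Q(3))
      moreover have "w + (- snd p / l) \<cdot>\<^sub>v a = fst p" using p a unfolding w_def by (auto intro!: eq_vecI)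
      moreover have "(Q *\<^sub>v w, - snd p / l) \<in> ?S" using Q w by auto
      ultimately show "unitz_mult W (a, - l) ((\<lambda>p. (Q *\<^sub>v (fst p - (- snd p / l) \<cdot>\<^sub>v a), - snd p / l)) p) = p"
        using f l unfolding w_def[symmetric] by (cases p) auto
    qed
    have "bij_betw (\<lambda>q. unitz_mult W q (a, - l)) ?S ?S"
      by (rule bij_betw_cong[THEN iffD1, OF _ L]) (use unitz_comm[OF W] a in auto)
    with L have "m_invertible_on ?S (unitz_mult W) (a, - l)"
      unfolding m_invertible_on_def by simp
    thus ?thesis using False W unfolding m_spectrum_def by auto
  qed
qed



lemma rad0: assumes W: "W \<in> carrier_mat n n" and a: "a \<in> carrier_vec n"
  shows "m_spectral_radius W a = 0 \<longleftrightarrow> \<not> (\<exists>l. l \<noteq> 0 \<and> eigenvalue (W * diag_of a) l)"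
proof
  assume r: "m_spectral_radius W a = 0"
  show "\<not> (\<exists>l. l \<noteq> 0 \<and> eigenvalue (W * diag_of a) l)"
  proof
    assume "\<exists>l. l \<noteq> 0 \<and> eigenvalue (W * diag_of a) l"
    then obtain l where l: "l \<noteq> 0" "eigenvalue (W * diag_of a) l" by blast
    have ls: "l \<in> m_spectrum W a" using spec_in[OF W a l(2)] .
    hence "ereal (cmod l) \<le> Sup ((\<lambda>l. ereal (cmod l)) ` m_spectrum W a)"
      by (intro Sup_upper) auto
    hence "ereal (cmod l) \<le> 0" using r ls unfolding m_spectral_radius_def by (auto split: if_splits)
    thus False using l(1) by simp
  qed
next
  assume ne: "\<not> (\<exists>l. l \<noteq> 0 \<and> eigenvalue (W * diag_of a) l)"
  have sub: "m_spectrum W a \<subseteq> {0}" using spec_out[OF W a] ne by blast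
  show "m_spectral_radius W a = 0"
  proof (cases "m_spectrum W a = {}")
    case True thus ?thesis unfolding m_spectral_radius_def by simp
  next
    case False
    hence "m_spectrum W a = {0}" using sub by blast
    thus ?thesis unfolding m_spectral_radius_def by (simp add: zero_ereal_def)
  qed
qed

lemma W_unit: fixes W :: "complex mat" assumes "W \<in> carrier_mat n n" "k < n" shows "W *\<^sub>v unit_vec n k = col W k"
proof (rule eq_vecI)
  fix i assume "i < dim_vec (col W k)"
  thus "(W *\<^sub>v unit_vec n k) $ i = col W k $ i"
    using assms scalar_prod_right_unit[of k n "row W i"] by simp
qed (use assms in simp)

lemma lin_sq_eq: assumes W: "W \<in> carrier_mat n n"
  shows "finsum_vec TYPE(complex) n (\<lambda>j. c j \<cdot>\<^sub>v col W j) (S \<inter> {..<n}) = W *\<^sub>v vec n (\<lambda>j. if j \<in> S then c j else 0)"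
proof (rule eq_vecI)
  have cl: "(\<lambda>j. c j \<cdot>\<^sub>v col W j) \<in> S \<inter> {..<n} \<rightarrow> carrier_vec n" using W by auto
  show "dim_vec (finsum_vec TYPE(complex) n (\<lambda>j. c j \<cdot>\<^sub>v col W j) (S \<inter> {..<n})) = dim_vec (W *\<^sub>v vec n (\<lambda>j. if j \<in> S then c j else 0))"
    using finsum_vec_closed[OF cl] W by auto
  fix i assume "i < dim_vec (W *\<^sub>v vec n (\<lambda>j. if j \<in> S then c j else 0))"
  hence i: "i < n" using W by simp
  have "finsum_vec TYPE(complex) n (\<lambda>j. c j \<cdot>\<^sub>v col W j) (S \<inter> {..<n}) $ i = (\<Sum>j\<in>S \<inter> {..<n}. c j * W $$ (i, j))"
    using index_finsum_vec[OF _ i cl] W i by simp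
  also have "\<dots> = (\<Sum>j\<in>{..<n}. if j \<in> S then c j * W $$ (i, j) else 0)"
    by (simp add: sum.If_cases Int_commute)
  also have "\<dots> = (W *\<^sub>v vec n (\<lambda>j. if j \<in> S then c j else 0)) $ i"
    using W i by (auto simp: scalar_prod_def atLeast0LessThan intro!: sum.cong)
  finally show "finsum_vec TYPE(complex) n (\<lambda>j. c j \<cdot>\<^sub>v col W j) (S \<inter> {..<n}) $ i = (W *\<^sub>v vec n (\<lambda>j. if j \<in> S then c j else 0)) $ i" .
qed

lemma lin_sq_char: assumes W: "W \<in> carrier_mat n n"
  shows "lin_squares W S = {W *\<^sub>v v | v. v \<in> carrier_vec n \<and> (\<forall>j<n. j \<notin> S \<longrightarrow> v $ j = 0)}"
proof -
  have "x \<in> lin_squares W S \<longleftrightarrow> (\<exists>v. x = W *\<^sub>v v \<and> v \<in> carrier_vec n \<and> (\<forall>j<n. j \<notin> S \<longrightarrow> v $ j = 0))" for x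
  proof
    assume "x \<in> lin_squares W S"
    then obtain c where "x = finsum_vec TYPE(complex) n (\<lambda>j. c j \<cdot>\<^sub>v col W j) (S \<inter> {..<n})"
      using W unfolding lin_squares_def by auto
    thus "\<exists>v. x = W *\<^sub>v v \<and> v \<in> carrier_vec n \<and> (\<forall>j<n. j \<notin> S \<longrightarrow> v $ j = 0)"
      using lin_sq_eq[OF W] by (intro exI[of _ "vec n (\<lambda>j. if j \<in> S then c j else 0)"]) auto
  next
    assume "\<exists>v. x = W *\<^sub>v v \<and> v \<in> carrier_vec n \<and> (\<forall>j<n. j \<notin> S \<longrightarrow> v $ j = 0)"
    then obtain v where v: "x = W *\<^sub>v v" "v \<in> carrier_vec n" "\<forall>j<n. j \<notin> S \<longrightarrow> v $ j = 0" by blast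
    have "vec n (\<lambda>j. if j \<in> S then v $ j else 0) = v" using v by (intro eq_vecI) auto
    hence "x = finsum_vec TYPE(complex) n (\<lambda>j. v $ j \<cdot>\<^sub>v col W j) (S \<inter> {..<n})"
      using lin_sq_eq[OF W, of "\<lambda>j. v $ j" S] v(1) by simp
    thus "x \<in> lin_squares W S" using W unfolding lin_squares_def by auto
  qed
  thus ?thesis by blast
qed

lemma evo_mult_unit: assumes W: "W \<in> carrier_mat n n" and x: "x \<in> carrier_vec n" and k: "k < n"
  shows "evo_mult W x (c \<cdot>\<^sub>v unit_vec n k) = (x $ k * c) \<cdot>\<^sub>v col W k"
proof -
  have "vec (dim_col W) (\<lambda>j. x $ j * (c \<cdot>\<^sub>v unit_vec n k) $ j) = (x $ k * c) \<cdot>\<^sub>v unit_vec n k"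
    using W x k by (intro eq_vecI) auto
  thus ?thesis unfolding evo_mult_def using W k mult_mat_vec[OF W, of "unit_vec n k"] W_unit[OF W k] by simp
qed

lemma smult_nonzero: "v \<in> carrier_vec n \<Longrightarrow> v \<noteq> 0\<^sub>v n \<Longrightarrow> (l::complex) \<cdot>\<^sub>v v = 0\<^sub>v n \<Longrightarrow> l = 0"
proof (rule ccontr)
  assume v: "v \<in> carrier_vec n" "v \<noteq> 0\<^sub>v n" "l \<cdot>\<^sub>v v = 0\<^sub>v n" and l: "l \<noteq> 0"
  obtain j where j: "j < n" "v $ j \<noteq> 0"
  proof (rule ccontr)
    assume "\<not> thesis"
    hence "\<forall>j<n. v $ j = 0" using that by blast
    hence "v = 0\<^sub>v n" using v(1) by (intro eq_vecI) auto
    thus False using v(2) by simp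
  qed
  have "(l \<cdot>\<^sub>v v) $ j = l * v $ j" using j v(1) by simp
  hence "l * v $ j = 0" using v(3) j by simp
  thus False using l j by simp
qed

lemma ideal_col: assumes W: "W \<in> carrier_mat n n" and I: "evo_ideal W I" and y: "y \<in> I"
  and k: "k < n" and yk: "y $ k \<noteq> 0"
  shows "col W k \<in> I"
proof -
  have yc: "y \<in> carrier_vec n" using I y W unfolding evo_ideal_def by auto
  have "vec (dim_col W) (\<lambda>j. unit_vec n k $ j * y $ j) = y $ k \<cdot>\<^sub>v unit_vec n k"
    using W yc k by (intro eq_vecI) auto
  hence "evo_mult W (unit_vec n k) y = y $ k \<cdot>\<^sub>v col W k"
    unfolding evo_mult_def using W k mult_mat_vec[OF W, of "unit_vec n k"] W_unit[OF W k] by simp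
  moreover have "evo_mult W (unit_vec n k) y \<in> I" using I y W unfolding evo_ideal_def by auto
  ultimately have "(1 / y $ k) \<cdot>\<^sub>v (y $ k \<cdot>\<^sub>v col W k) \<in> I" using I unfolding evo_ideal_def by metis
  thus ?thesis using yk by (simp add: smult_smult_assoc)
qed



lemma desc_closed: assumes W: "W \<in> carrier_mat n n"
  and k: "k \<in> descendents W i \<union> {i}" "k < n" and j: "j < n" and w: "W $$ (j, k) \<noteq> 0"
  shows "j \<in> descendents W i \<union> {i}"
proof -
  have r: "(k, j) \<in> desc_rel W" using W k j w unfolding desc_rel_def by auto
  show ?thesis
  proof (cases "k = i")
    case True thus ?thesis using r unfolding descendents_def by auto
  next
    case False
    hence "(i, k) \<in> (desc_rel W)\<^sup>+" using k(1) unfolding descendents_def by auto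
    thus ?thesis using r unfolding descendents_def by (auto intro: trancl_into_trancl)
  qed
qed

lemma desc_cols: assumes W: "W \<in> carrier_mat n n" and I: "evo_ideal W I"
  and ci: "col W i \<in> I" and j: "j \<in> descendents W i"
  shows "col W j \<in> I"
proof -
  have "(i, j) \<in> (desc_rel W)\<^sup>+" using j unfolding descendents_def by auto
  thus ?thesis
  proof (induction rule: trancl_induct)
    case (base y)
    hence "y < n" "i < n" "W $$ (y, i) \<noteq> 0" using W unfolding desc_rel_def by auto
    thus ?case using ideal_col[OF W I ci, of y] W by simp
  next
    case (step y z)
    hence "z < n" "y < n" "W $$ (z, y) \<noteq> 0" using W unfolding desc_rel_def by auto
    thus ?case using ideal_col[OF W I step.IH, of z] W by simp
  qed
qed

lemma ideal_span: assumes W: "W \<in> carrier_mat n n" and I: "evo_ideal W I"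
  and cols: "\<And>j. j \<in> F \<Longrightarrow> col W j \<in> I" and F: "F \<subseteq> {..<n}"
  shows "W *\<^sub>v vec n (\<lambda>j. if j \<in> F then v $ j else 0) \<in> I"
proof -
  have "finite F" using F finite_subset by blast
  thus ?thesis using cols F
  proof (induction F rule: finite_induct)
    case empty
    have "vec n (\<lambda>j. if j \<in> {} then v $ j else 0) = 0\<^sub>v n" by (intro eq_vecI) auto
    moreover have "W *\<^sub>v 0\<^sub>v n = 0\<^sub>v n" using W by (intro eq_vecI) (auto simp: scalar_prod_def)
    ultimately show ?case using I W unfolding evo_ideal_def by simp
  next
    case (insert k F)
    have k: "k < n" using insert by auto
    have "vec n (\<lambda>j. if j \<in> insert k F then v $ j else 0) =
          vec n (\<lambda>j. if j \<in> F then v $ j else 0) + v $ k \<cdot>\<^sub>v unit_vec n k"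
      using insert(2) k by (intro eq_vecI) auto
    hence "W *\<^sub>v vec n (\<lambda>j. if j \<in> insert k F then v $ j else 0) =
          W *\<^sub>v vec n (\<lambda>j. if j \<in> F then v $ j else 0) + v $ k \<cdot>\<^sub>v col W k"
      using W k by (simp add: mult_add_distrib_mat_vec[OF W] mult_mat_vec[OF W] W_unit[OF W k])
    moreover have "W *\<^sub>v vec n (\<lambda>j. if j \<in> F then v $ j else 0) \<in> I" using insert by auto
    moreover have "v $ k \<cdot>\<^sub>v col W k \<in> I" using insert I unfolding evo_ideal_def by auto
    ultimately show ?case using I unfolding evo_ideal_def by metis
  qed
qed



lemma dir1: assumes W: "W \<in> carrier_mat n n"
  and R: "\<forall>i<n. \<exists>a \<in> lin_squares W (descendents W i \<union> {i}).
        \<exists>l. l \<noteq> 0 \<and> eigenvalue (W * diag_of a) l"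
  shows "m_semisimple W"
  unfolding m_semisimple_def
proof (intro allI impI)
  fix I assume "evo_ideal W I \<and> I \<subseteq> {a \<in> carrier_vec (dim_col W). m_spectral_radius W a = 0}"
  hence I: "evo_ideal W I" and IQ: "I \<subseteq> {a \<in> carrier_vec n. m_spectral_radius W a = 0}" using W by auto
  have z: "0\<^sub>v n \<in> I" using I W unfolding evo_ideal_def by auto
  have "x = 0\<^sub>v n" if x: "x \<in> I" for x
  proof (rule ccontr)
    assume nz: "x \<noteq> 0\<^sub>v n"
    have xc: "x \<in> carrier_vec n" using x IQ by auto
    obtain i where i: "i < n" "x $ i \<noteq> 0" using nz xc by (metis eq_vecI index_zero_vec carrier_vecD)
    have ci: "col W i \<in> I" using ideal_col[OF W I x i] .
    let ?S = "descendents W i \<union> {i}"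
    have cols: "col W j \<in> I" if "j \<in> ?S \<inter> {..<n}" for j
      using that ci desc_cols[OF W I ci] by auto
    from R i obtain a l where a: "a \<in> lin_squares W ?S" and l: "l \<noteq> 0" "eigenvalue (W * diag_of a) l"
      by blast
    from a obtain v where v: "a = W *\<^sub>v v" "v \<in> carrier_vec n" "\<forall>j<n. j \<notin> ?S \<longrightarrow> v $ j = 0"
      unfolding lin_sq_char[OF W] by blast
    have "vec n (\<lambda>j. if j \<in> ?S \<inter> {..<n} then v $ j else 0) = v" using v by (intro eq_vecI) auto
    moreover have "W *\<^sub>v vec n (\<lambda>j. if j \<in> ?S \<inter> {..<n} then v $ j else 0) \<in> I"
      by (rule ideal_span[OF W I cols]) auto
    ultimately have "a \<in> I" using v(1) by simp
    hence "a \<in> carrier_vec n" "m_spectral_radius W a = 0" using IQ by auto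
    thus False using rad0[OF W] l by blast
  qed
  moreover have "dim_col W = n" using W by simp
  ultimately show "I = {0\<^sub>v (dim_col W)}" using z by blast
qed

lemma dir2: assumes W: "W \<in> carrier_mat n n" and ss: "m_semisimple W" and i: "i < n"
  shows "\<exists>a \<in> lin_squares W (descendents W i \<union> {i}). \<exists>l. l \<noteq> 0 \<and> eigenvalue (W * diag_of a) l"
proof (rule ccontr)
  let ?S = "descendents W i \<union> {i}"
  assume "\<not> ?thesis"
  hence H: "\<And>a. a \<in> lin_squares W ?S \<Longrightarrow> \<not> (\<exists>l. l \<noteq> 0 \<and> eigenvalue (W * diag_of a) l)" by blast
  have ss': "\<And>I. evo_ideal W I \<Longrightarrow> I \<subseteq> {a \<in> carrier_vec n. m_spectral_radius W a = 0} \<Longrightarrow> I = {0\<^sub>v n}"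
    using ss W unfolding m_semisimple_def by auto
  show False
  proof (cases "col W i = 0\<^sub>v n")
    case True
    define I where "I = range (\<lambda>c::complex. c \<cdot>\<^sub>v unit_vec n i)"
    have prod: "evo_mult W x (c \<cdot>\<^sub>v unit_vec n i) = 0\<^sub>v n" if "x \<in> carrier_vec n" for x c
    proof -
      have "(x $ i * c) \<cdot>\<^sub>v 0\<^sub>v n = 0\<^sub>v n" by (intro eq_vecI) auto
      thus ?thesis using evo_mult_unit[OF W that i, of c] True by simp
    qed
    have "evo_ideal W I" unfolding evo_ideal_def
    proof (intro conjI ballI allI)
      show "I \<subseteq> carrier_vec (dim_col W)" using W unfolding I_def by auto
      have "0\<^sub>v n = (0::complex) \<cdot>\<^sub>v unit_vec n i" by (intro eq_vecI) auto
      thus "0\<^sub>v (dim_col W) \<in> I" using W unfolding I_def by auto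
      show "x + y \<in> I" if "x \<in> I" "y \<in> I" for x y
        using that unfolding I_def by (auto simp: add_smult_distrib_vec[symmetric])
      show "c \<cdot>\<^sub>v x \<in> I" if "x \<in> I" for x c
        using that unfolding I_def by (auto simp: smult_smult_assoc)
      fix a x :: "complex vec" assume a: "a \<in> carrier_vec (dim_col W)" and x: "x \<in> I"
      then obtain c where xc: "x = c \<cdot>\<^sub>v unit_vec n i" unfolding I_def by auto
      have a': "a \<in> carrier_vec n" using a W by simp
      show "evo_mult W a x \<in> I" "evo_mult W x a \<in> I"
        using prod[OF a', of c] evo_mult_comm[of W x a] \<open>0\<^sub>v (dim_col W) \<in> I\<close> W xc by auto
    qed
    moreover have "I \<subseteq> {a \<in> carrier_vec n. m_spectral_radius W a = 0}"
    proof
      fix x assume "x \<in> I"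
      then obtain c where xc: "x = c \<cdot>\<^sub>v unit_vec n i" unfolding I_def by auto
      have xcar: "x \<in> carrier_vec n" using xc by auto
      have "\<not> (\<exists>l. l \<noteq> 0 \<and> eigenvalue (W * diag_of x) l)"
      proof
        assume "\<exists>l. l \<noteq> 0 \<and> eigenvalue (W * diag_of x) l"
        then obtain l v where l: "l \<noteq> 0" and v: "v \<in> carrier_vec n" "v \<noteq> 0\<^sub>v n" "(W * diag_of x) *\<^sub>v v = l \<cdot>\<^sub>v v"
          using W diag_of_carrier[OF xcar] unfolding eigenvalue_def eigenvector_def by auto
        have "(W * diag_of x) *\<^sub>v v = evo_mult W v x" using evo_mult_eq[OF W xcar v(1)] evo_mult_comm by metis
        also have "\<dots> = 0\<^sub>v n" using prod[OF v(1)] xc by simp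
        finally have "l = 0" using smult_nonzero[OF v(1,2)] v(3) by simp
        thus False using l by simp
      qed
      thus "x \<in> {a \<in> carrier_vec n. m_spectral_radius W a = 0}" using rad0[OF W xcar] xcar by simp
    qed
    ultimately have "I = {0\<^sub>v n}" by (rule ss')
    moreover have "unit_vec n i \<in> I" unfolding I_def by (rule range_eqI[of _ _ 1]) simp
    ultimately show False using unit_vec_nonzero[OF i] by auto
  next
    case False
    define I where "I = lin_squares W ?S"
    have Ichar: "I = {W *\<^sub>v v | v. v \<in> carrier_vec n \<and> (\<forall>j<n. j \<notin> ?S \<longrightarrow> v $ j = 0)}"
      unfolding I_def by (rule lin_sq_char[OF W])
    have Ic: "I \<subseteq> carrier_vec n" unfolding Ichar using W by auto
    have "evo_ideal W I" unfolding evo_ideal_def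
    proof (intro conjI ballI allI)
      show "I \<subseteq> carrier_vec (dim_col W)" using W Ic by auto
      have "W *\<^sub>v 0\<^sub>v n = 0\<^sub>v n" using W by (intro eq_vecI) (auto simp: scalar_prod_def)
      thus "0\<^sub>v (dim_col W) \<in> I" unfolding Ichar using W by (auto intro!: exI[of _ "0\<^sub>v n"])
      show "x + y \<in> I" if xI: "x \<in> I" and yI: "y \<in> I" for x y
      proof -
        obtain v where "x = W *\<^sub>v v" "v \<in> carrier_vec n" "\<forall>j<n. j \<notin> ?S \<longrightarrow> v $ j = 0"
          using xI Ichar by blast
        moreover obtain w where "y = W *\<^sub>v w" "w \<in> carrier_vec n" "\<forall>j<n. j \<notin> ?S \<longrightarrow> w $ j = 0"
          using yI Ichar by blast
        ultimately show ?thesis unfolding Ichar using W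
          by (intro CollectI exI[of _ "v + w"]) (auto simp: mult_add_distrib_mat_vec[OF W])
      qed
      show "c \<cdot>\<^sub>v x \<in> I" if xI: "x \<in> I" for x c
      proof -
        obtain v where "x = W *\<^sub>v v" "v \<in> carrier_vec n" "\<forall>j<n. j \<notin> ?S \<longrightarrow> v $ j = 0"
          using xI Ichar by blast
        thus ?thesis unfolding Ichar using W
          by (intro CollectI exI[of _ "c \<cdot>\<^sub>v v"]) (auto simp: mult_mat_vec[OF W])
      qed
      fix a x :: "complex vec" assume a: "a \<in> carrier_vec (dim_col W)" and x: "x \<in> I"
      obtain v where v: "x = W *\<^sub>v v" "v \<in> carrier_vec n" "\<forall>j<n. j \<notin> ?S \<longrightarrow> v $ j = 0"
        using x unfolding Ichar by blast
      have supp: "x $ j = 0" if j: "j < n" "j \<notin> ?S" for j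
      proof -
        have "x $ j = (\<Sum>k<n. W $$ (j, k) * v $ k)"
          using v W j by (simp add: scalar_prod_def atLeast0LessThan)
        also have "\<dots> = 0"
        proof (rule sum.neutral, rule ballI)
          fix k assume k: "k \<in> {..<n}"
          show "W $$ (j, k) * v $ k = 0"
          proof (cases "k \<in> ?S")
            case True
            hence "W $$ (j, k) = 0" using desc_closed[OF W True _ j(1)] j k by auto
            thus ?thesis by simp
          qed (use v k in auto)
        qed
        finally show ?thesis .
      qed
      have "evo_mult W a x = W *\<^sub>v vec n (\<lambda>j. a $ j * x $ j)" using W unfolding evo_mult_def by simp
      moreover have "vec n (\<lambda>j. a $ j * x $ j) \<in> carrier_vec n" by simp
      moreover have "\<forall>j<n. j \<notin> ?S \<longrightarrow> vec n (\<lambda>j. a $ j * x $ j) $ j = 0" using supp by simp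
      ultimately show "evo_mult W a x \<in> I" unfolding Ichar by blast
      thus "evo_mult W x a \<in> I" by (simp add: evo_mult_comm)
    qed
    moreover have "I \<subseteq> {a \<in> carrier_vec n. m_spectral_radius W a = 0}"
      using H Ic rad0[OF W] unfolding I_def by auto
    ultimately have "I = {0\<^sub>v n}" by (rule ss')
    moreover have "col W i \<in> I" unfolding Ichar
      using W_unit[OF W i] i by (intro CollectI exI[of _ "unit_vec n i"]) auto
    ultimately show False using False by auto
  qed
qed

theorem corollary5p9:
  fixes W :: "complex mat" and n :: nat
  assumes "W \<in> carrier_mat n n"
  shows "m_semisimple W \<longleftrightarrow>
    (\<forall>i<n. \<exists>a \<in> lin_squares W (descendents W i \<union> {i}).
        \<exists>l. l \<noteq> 0 \<and> eigenvalue (W * diag_of a) l)"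
  using dir1[OF assms] dir2[OF assms] by blast


end
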